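(* For $n=1,2,\dots$ let $\varphi_*^{(n)}(x):=\varphi^{(n)}(x)-\frac12$, $x\in[0,1]$, and let $E[X]:=\int_0^1X(x)\,dx$. Then for any positive integers $i<j$, $$E\big[(\varphi_*^{(i)})^2(\varphi_*^{(j)})^2\big]-E\big[(\varphi_*^{(i)})^2\big]E\big[(\varphi_*^{(j)})^2\big]=\frac1{180}\cdot\frac1{4^{j-i}}.$$
   Context: The tent map on $[0,1]$ is $\varphi(x)=2x$ for $x\in[0,1/2]$ and $\varphi(x)=2(1-x)$ for $x\in[1/2,1]$; it is extended to $\mathbb{R}$ by $\varphi(x):=\varphi(x-[x])$, and $\varphi^{(n)}$ denotes the $n$-fold iterate of $\varphi$, so that $\varphi^{(n)}(x)=\varphi(2^{n-1}x)$. *)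

theory Defs
  imports "HOL-Analysis.Analysis"
begin

definition tent :: "real \<Rightarrow> real" where
  "tent x = (let y = frac x in if y \<le> 1/2 then 2 * y else 2 * (1 - y))"

definition tent_iter :: "nat \<Rightarrow> real \<Rightarrow> real" where
  "tent_iter n = tent ^^ n"

definition tent_c :: "nat \<Rightarrow> real \<Rightarrow> real" where
  "tent_c n x = tent_iter n x - 1/2"

definition Ex :: "(real \<Rightarrow> real) \<Rightarrow> real" where
  "Ex X = integral {0..1} X"

end

theory Submission
  imports Defs
begin

lemma tent_lo: "0 \<le> x \<Longrightarrow> x \<le> 1/2 \<Longrightarrow> tent x = 2 * x"
proof -
  assume a: "0 \<le> x" "x \<le> 1/2"
  then have "frac x = x" by (simp add: frac_eq)
  then show ?thesis using a by (simp add: tent_def)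
qed

lemma tent_hi: "1/2 \<le> x \<Longrightarrow> x \<le> 1 \<Longrightarrow> tent x = 2 - 2 * x"
proof -
  assume a: "1/2 \<le> x" "x \<le> 1"
  show ?thesis
  proof (cases "x = 1")
    case True then show ?thesis by (simp add: tent_def)
  next
    case False
    then have "frac x = x" using a by (simp add: frac_eq)
    then show ?thesis using a by (auto simp add: tent_def)
  qed
qed

lemma tent_range: "x \<in> {0..1} \<Longrightarrow> tent x \<in> {0..1}"
  by (cases "x \<le> 1/2") (auto simp: tent_lo tent_hi)

lemma tent_cont: "continuous_on {0..1} tent"
proof -
  have "{0..1::real} = {0..1/2} \<union> {1/2..1}" by auto
  moreover have "continuous_on {0..1/2} tent"
    by (rule continuous_on_eq[of _ "\<lambda>x. 2 * x"]) (auto intro!: continuous_intros simp: tent_lo)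
  moreover have "continuous_on {1/2..1} tent"
    by (rule continuous_on_eq[of _ "\<lambda>x. 2 - 2 * x"]) (auto intro!: continuous_intros simp: tent_hi)
  ultimately show ?thesis by (metis closed_atLeastAtMost continuous_on_closed_Un)
qed

lemma iter_range: "x \<in> {0..1} \<Longrightarrow> (tent ^^ n) x \<in> {0..1}"
proof (induction n)
  case (Suc n) then show ?case using tent_range by simp
qed simp

lemma iter_cont: "continuous_on {0..1} (tent ^^ n)"
proof (induction n)
  case 0 then show ?case by (simp add: continuous_on_id)
next
  case (Suc n)
  have "continuous_on {0..1} (tent \<circ> (tent ^^ n))"
    by (rule continuous_on_compose[OF Suc]) (rule continuous_on_subset[OF tent_cont], auto intro: iter_range)
  then show ?case by simp
qed

lemma transfer:
  fixes q F :: "real \<Rightarrow> real"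
  assumes q: "continuous_on {0..1} q" and F: "continuous_on {0..1} F"
  shows "integral {0..1} (\<lambda>x. q x * F (tent x)) =
         integral {0..1} (\<lambda>y. (q (y/2) + q (1 - y/2)) / 2 * F y)"
proof -
  define f1 where "f1 = (\<lambda>x. q x * F (2 * x))"
  define f2 where "f2 = (\<lambda>x. q x * F (2 - 2 * x))"
  have c1: "continuous_on {0..1/2} f1" unfolding f1_def
  proof -
    have "continuous_on {0..1/2} q" by (rule continuous_on_subset[OF q]) auto
    moreover have "continuous_on {0..1/2} (\<lambda>x. F (2 * x))"
      by (rule continuous_on_compose2[OF F]) (auto intro!: continuous_intros)
    ultimately show "continuous_on {0..1/2} (\<lambda>x. q x * F (2 * x))" by (rule continuous_on_mult)
  qed
  have c2: "continuous_on {1/2..1} f2" unfolding f2_def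
  proof -
    have "continuous_on {1/2..1} q" by (rule continuous_on_subset[OF q]) auto
    moreover have "continuous_on {1/2..1} (\<lambda>x. F (2 - 2 * x))"
      by (rule continuous_on_compose2[OF F]) (auto intro!: continuous_intros)
    ultimately show "continuous_on {1/2..1} (\<lambda>x. q x * F (2 - 2 * x))" by (rule continuous_on_mult)
  qed
  have s1: "((\<lambda>y. (1/2) *\<^sub>R f1 (y/2)) has_integral integral {0/2..1/2} f1) {0..1}"
  proof (rule has_integral_substitution[where g="\<lambda>y. y/2" and g'="\<lambda>_. 1/2" and c=0 and d="1/2"])
    show "(\<lambda>y::real. y / 2) ` {0..1} \<subseteq> {0..1 / 2}" by auto
    show "continuous_on {0..1 / 2} f1" by (rule c1)
    fix x :: real
    show "((\<lambda>y::real. y / 2) has_real_derivative 1 / 2) (at x within {0..1})"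
      by (rule derivative_eq_intros refl | simp)+
  qed auto
  have s2: "((\<lambda>y. (-1/2) *\<^sub>R f2 (1 - y/2)) has_integral
     (integral {1 - 0/2..1 - 1/2} f2 - integral {1 - 1/2..1 - 0/2} f2)) {0..1}"
  proof (rule has_integral_substitution_general[where g="\<lambda>y. 1 - y/2" and g'="\<lambda>_. -1/2" and s="{}" and c="1/2" and d=1])
    show "(\<lambda>y::real. 1 - y / 2) ` {0..1} \<subseteq> {1/2..1}" by auto
    show "continuous_on {1/2..1} f2" by (rule c2)
    show "continuous_on {0..1} (\<lambda>y::real. 1 - y / 2)" by (intro continuous_intros) auto
    fix x :: real
    show "((\<lambda>y::real. 1 - y / 2) has_real_derivative -1 / 2) (at x within {0..1})"
      by (rule derivative_eq_intros refl | simp)+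
  qed auto
  have s2': "((\<lambda>y. (1/2) * f2 (1 - y/2)) has_integral integral {1/2..1} f2) {0..1}"
    using has_integral_neg[OF s2] by simp
  have i1: "((\<lambda>x. q x * F (tent x)) has_integral integral {0..1/2} f1) {0..1/2}"
    apply (rule has_integral_eq[of _ f1])
     apply (simp add: f1_def tent_lo)
    using integrable_integral[OF integrable_continuous_real[OF c1]] by simp
  have i2: "((\<lambda>x. q x * F (tent x)) has_integral integral {1/2..1} f2) {1/2..1}"
    apply (rule has_integral_eq[of _ f2])
     apply (simp add: f2_def tent_hi)
    using integrable_integral[OF integrable_continuous_real[OF c2]] by simp
  have L: "((\<lambda>x. q x * F (tent x)) has_integral (integral {0..1/2} f1 + integral {1/2..1} f2)) {0..1}"
    by (rule has_integral_combine[OF _ _ i1 i2]) auto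
  have R: "((\<lambda>y. (q (y/2) + q (1 - y/2)) / 2 * F y) has_integral
      (integral {0..1/2} f1 + integral {1/2..1} f2)) {0..1}"
  proof -
    have "((\<lambda>y. (1/2) * f1 (y/2) + (1/2) * f2 (1 - y/2)) has_integral
      (integral {0..1/2} f1 + integral {1/2..1} f2)) {0..1}"
      using has_integral_add[OF s1 s2'] by simp
    then show ?thesis
      by (rule has_integral_eq[rotated]) (simp add: f1_def f2_def algebra_simps)
  qed
  show ?thesis using integral_unique[OF L] integral_unique[OF R] by simp
qed

lemma invariance:
  fixes H :: "real \<Rightarrow> real"
  assumes H: "continuous_on {0..1} H"
  shows "integral {0..1} (\<lambda>x. H ((tent ^^ n) x)) = integral {0..1} H"
proof (induction n)
  case 0 then show ?case by simp
next
  case (Suc n)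
  have cF: "continuous_on {0..1} (\<lambda>y. H ((tent ^^ n) y))"
    by (rule continuous_on_compose2[OF H iter_cont]) (auto intro: iter_range)
  have "integral {0..1} (\<lambda>x. H ((tent ^^ Suc n) x)) = integral {0..1} (\<lambda>x. 1 * H ((tent ^^ n) (tent x)))"
    by (simp add: funpow_Suc_right del: funpow.simps)
  also have "\<dots> = integral {0..1} (\<lambda>y. ((\<lambda>_. 1) (y/2) + (\<lambda>_. 1) (1 - y/2)) / 2 * H ((tent ^^ n) y))"
    using transfer[of "\<lambda>_. 1" "\<lambda>y. H ((tent ^^ n) y)", OF continuous_on_const cF] by simp
  also have "\<dots> = integral {0..1} H" using Suc by simp
  finally show ?case .
qed

lemma base:
  "integral {0..1} (\<lambda>x::real. (a*x^2+b*x+c) * (x - 1/2)^2) = (a/3+b/2+c)/12 + a/180"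
proof -
  define P where "P = (\<lambda>x::real. a*x^5/5 + (b-a)*x^4/4 + (a/4-b+c)*x^3/3 + (b/4-c)*x^2/2 + c*x/4)"
  have "((\<lambda>x::real. (a*x^2+b*x+c) * (x - 1/2)^2) has_integral (P 1 - P 0)) {0..1}"
  proof (rule fundamental_theorem_of_calculus)
    fix x :: real
    have "(P has_real_derivative (a*x^2+b*x+c) * (x - 1/2)^2) (at x within {0..1})"
      unfolding P_def
      by (rule derivative_eq_intros refl | simp)+ (simp add: power2_eq_square power3_eq_cube algebra_simps eval_nat_numeral)
    then show "(P has_vector_derivative (a*x^2+b*x+c) * (x - 1/2)^2) (at x within {0..1})"
      by (simp add: has_real_derivative_iff_has_vector_derivative)
  qed simp
  then have "integral {0..1} (\<lambda>x::real. (a*x^2+b*x+c) * (x - 1/2)^2) = P 1 - P 0"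
    by (rule integral_unique)
  also have "P 1 - P 0 = (a/3+b/2+c)/12 + a/180" by (simp add: P_def field_simps)
  finally show ?thesis .
qed

lemma Phi:
  "integral {0..1} (\<lambda>x. (a*x^2+b*x+c) * ((tent ^^ k) x - 1/2)^2) = (a/3+b/2+c)/12 + a/(180*4^k)"
proof (induction k arbitrary: a b c)
  case 0 then show ?case using base by simp
next
  case (Suc k)
  have cF: "continuous_on {0..1} (\<lambda>y. ((tent ^^ k) y - 1/2)^2)"
    by (intro continuous_intros iter_cont)
  have cq: "continuous_on {0..1} (\<lambda>x. a*x^2+b*x+c)" by (intro continuous_intros)
  have "integral {0..1} (\<lambda>x. (a*x^2+b*x+c) * ((tent ^^ Suc k) x - 1/2)^2)
      = integral {0..1} (\<lambda>x. (a*x^2+b*x+c) * ((tent ^^ k) (tent x) - 1/2)^2)"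
    by (simp add: funpow_Suc_right del: funpow.simps)
  also have "\<dots> = integral {0..1} (\<lambda>y. ((a*(y/2)^2+b*(y/2)+c) + (a*(1-y/2)^2+b*(1-y/2)+c)) / 2 * ((tent ^^ k) y - 1/2)^2)"
    using transfer[OF cq cF] by simp
  also have "\<dots> = integral {0..1} (\<lambda>y. ((a/4)*y^2 + (-a/2)*y + (a/2+b/2+c)) * ((tent ^^ k) y - 1/2)^2)"
  proof (rule integral_cong)
    fix y :: real
    have e: "((a*(y/2)^2+b*(y/2)+c) + (a*(1-y/2)^2+b*(1-y/2)+c)) / 2 = (a/4)*y^2 + (-a/2)*y + (a/2+b/2+c)"
      by (simp add: power2_eq_square field_simps)
    show "((a*(y/2)^2+b*(y/2)+c) + (a*(1-y/2)^2+b*(1-y/2)+c)) / 2 * ((tent ^^ k) y - 1/2)^2 = ((a/4)*y^2 + (-a/2)*y + (a/2+b/2+c)) * ((tent ^^ k) y - 1/2)^2"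
      by (simp only: e)
  qed
  also have "\<dots> = ((a/4)/3 + (-a/2)/2 + (a/2+b/2+c))/12 + (a/4)/(180*4^k)"
    by (rule Suc)
  also have "\<dots> = (a/3+b/2+c)/12 + a/(180*4^Suc k)"
    by (simp add: field_simps)
  finally show ?case .
qed

theorem lemma2p6:
  fixes i j :: nat
  assumes "0 < i" and "i < j"
  shows "Ex (\<lambda>x. (tent_c i x)\<^sup>2 * (tent_c j x)\<^sup>2)
           - Ex (\<lambda>x. (tent_c i x)\<^sup>2) * Ex (\<lambda>x. (tent_c j x)\<^sup>2)
         = 1 / 180 * (1 / 4 ^ (j - i))"
proof -
  define k where "k = j - i"
  have jk: "j = k + i" using assms k_def by simp
  have Ej: "\<And>n. Ex (\<lambda>x. (tent_c n x)\<^sup>2) = 1/12"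
    using Phi[of 0 0 1] by (simp add: Ex_def tent_c_def tent_iter_def)
  define H where "H = (\<lambda>y. (y - 1/2)^2 * ((tent ^^ k) y - 1/2)^2)"
  have cH: "continuous_on {0..1} H" unfolding H_def by (intro continuous_intros iter_cont)
  have "Ex (\<lambda>x. (tent_c i x)\<^sup>2 * (tent_c j x)\<^sup>2) = integral {0..1} (\<lambda>x. H ((tent ^^ i) x))"
    by (simp add: Ex_def tent_c_def tent_iter_def H_def jk funpow_add)
  also have "\<dots> = integral {0..1} H" by (rule invariance[OF cH])
  also have "\<dots> = integral {0..1} (\<lambda>x. (1*x^2+(-1)*x+1/4) * ((tent ^^ k) x - 1/2)^2)"
    unfolding H_def by (rule integral_cong) (simp add: power2_eq_square algebra_simps)
  also have "\<dots> = 1/144 + 1/(180*4^k)" by (subst Phi) simp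
  finally show ?thesis by (simp add: Ej k_def)
qed

end
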